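(* Let $V$ be a vector space over a field $F$ and $T:V\to V$ a (not necessarily linear) bijection. If $p(x)=\sum_{i=0}^m a_ix^i$ with $a_m\neq0$ is a vanishing polynomial of $T$, then the reciprocal polynomial $p^*(x)=\sum_{i=0}^m a_ix^{m-i}$ is a vanishing polynomial of $T^{-1}$. If $p_m$ is the minimal polynomial of $T$, then $p_m(0)\neq0$ and $p_m(0)^{-1}p_m^*$ is the minimal polynomial of $T^{-1}$.
   Context: For $T:V\to V$ (not necessarily linear), $T^0=I$, $T^i=T\circ T^{i-1}$, and $p(T)(v)=\sum a_iT^i(v)$ for $p(x)=\sum a_ix^i$. A vanishing polynomial of $T$ is a nonzero $p\in F[x]$ with $p(T)(v)=0$ for all $v\in V$; the minimal polynomial is the unique monic vanishing polynomial of least degree. *)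

theory Defs
  imports Main "HOL-Computational_Algebra.Polynomial"
begin

definition poly_app :: "('a::field \<Rightarrow> 'v::ab_group_add \<Rightarrow> 'v) \<Rightarrow> 'a poly \<Rightarrow> ('v \<Rightarrow> 'v) \<Rightarrow> 'v \<Rightarrow> 'v" where
  "poly_app scale p T v = (\<Sum>i\<le>degree p. scale (coeff p i) ((T ^^ i) v))"

definition vanishing_poly :: "('a::field \<Rightarrow> 'v::ab_group_add \<Rightarrow> 'v) \<Rightarrow> ('v \<Rightarrow> 'v) \<Rightarrow> 'a poly \<Rightarrow> bool" where
  "vanishing_poly scale T p \<longleftrightarrow> p \<noteq> 0 \<and> (\<forall>v. poly_app scale p T v = 0)"

definition minimal_poly :: "('a::field \<Rightarrow> 'v::ab_group_add \<Rightarrow> 'v) \<Rightarrow> ('v \<Rightarrow> 'v) \<Rightarrow> 'a poly \<Rightarrow> bool" where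
  "minimal_poly scale T p \<longleftrightarrow> lead_coeff p = 1 \<and> vanishing_poly scale T p \<and>
     (\<forall>q. vanishing_poly scale T q \<longrightarrow> degree p \<le> degree q)"

end

theory Submission
  imports Defs
begin

lemma poly_app_bound:
  assumes vs: "vector_space scale" and "degree p \<le> N"
  shows "poly_app scale p T v = (\<Sum>i\<le>N. scale (coeff p i) ((T ^^ i) v))"
  unfolding poly_app_def
proof (rule sum.mono_neutral_left)
  show "\<forall>i\<in>{..N} - {..degree p}. scale (coeff p i) ((T ^^ i) v) = 0"
    using module.scale_zero_left[OF vs[folded module_iff_vector_space]] by (auto simp: coeff_eq_0)
qed (use assms in auto)

lemma funpow_inv_cancel:
  fixes T S :: "'a \<Rightarrow> 'a"
  assumes "\<And>x. T (S x) = x"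
  shows "(T ^^ j) ((S ^^ j) x) = x"
proof (induction j arbitrary: x)
  case (Suc j)
  have e1: "(S ^^ Suc j) x = S ((S ^^ j) x)" by simp
  have e2: "(T ^^ Suc j) y = (T ^^ j) (T y)" for y by (simp only: funpow_Suc_right comp_def)
  have "(T ^^ Suc j) ((S ^^ Suc j) x) = (T ^^ j) (T (S ((S ^^ j) x)))"
    by (simp only: e1 e2)
  then show ?case using assms Suc by simp
qed simp

lemma funpow_inv_shift:
  fixes T S :: "'a \<Rightarrow> 'a"
  assumes "\<And>x. T (S x) = x" and "j \<le> m"
  shows "(T ^^ j) ((S ^^ m) v) = (S ^^ (m - j)) v"
proof -
  have "(S ^^ m) v = (S ^^ j) ((S ^^ (m - j)) v)"
    using assms(2) by (metis funpow_add le_add_diff_inverse comp_apply)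
  then show ?thesis using funpow_inv_cancel[of T S, OF assms(1)] by simp
qed

lemma reflect_vanishing:
  assumes vs: "vector_space scale" and b: "bij T" and van: "vanishing_poly scale T p"
  shows "vanishing_poly scale (inv T) (reflect_poly p)"
proof -
  let ?S = "inv T"
  define m where "m = degree p"
  have TS: "\<And>x. T (?S x) = x" using b by (simp add: bij_is_surj surj_f_inv_f)
  have "poly_app scale (reflect_poly p) ?S v = 0" for v
  proof -
    have "poly_app scale (reflect_poly p) ?S v
        = (\<Sum>i\<le>m. scale (coeff (reflect_poly p) i) ((?S ^^ i) v))"
      by (rule poly_app_bound[OF vs]) (simp add: m_def degree_reflect_poly_le)
    also have "\<dots> = (\<Sum>i\<le>m. scale (coeff p (m - i)) ((?S ^^ i) v))"
      by (rule sum.cong) (auto simp: coeff_reflect_poly m_def)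
    also have "\<dots> = (\<Sum>j\<le>m. scale (coeff p j) ((?S ^^ (m - j)) v))"
      by (rule sum.reindex_bij_witness[where i="\<lambda>i. m - i" and j="\<lambda>i. m - i"]) auto
    also have "\<dots> = (\<Sum>j\<le>m. scale (coeff p j) ((T ^^ j) ((?S ^^ m) v)))"
      by (rule sum.cong) (auto simp: funpow_inv_shift[of T "inv T", OF TS])
    also have "\<dots> = poly_app scale p T ((?S ^^ m) v)"
      by (simp add: poly_app_def m_def)
    also have "\<dots> = 0" using van by (simp add: vanishing_poly_def)
    finally show ?thesis .
  qed
  moreover have "reflect_poly p \<noteq> 0" using van by (simp add: vanishing_poly_def)
  ultimately show ?thesis by (simp add: vanishing_poly_def)
qed

lemma smult_vanishing:
  assumes vs: "vector_space scale" and van: "vanishing_poly scale T p" and c: "c \<noteq> 0"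
  shows "vanishing_poly scale T (smult c p)"
proof -
  have "poly_app scale (smult c p) T v = scale c (poly_app scale p T v)" for v
    by (simp add: poly_app_def c module.scale_sum_right[OF vs[folded module_iff_vector_space]]
        module.scale_scale[OF vs[folded module_iff_vector_space]])
  then show ?thesis using van c module.scale_zero_right[OF vs[folded module_iff_vector_space]]
    by (simp add: vanishing_poly_def)
qed

lemma shift_vanishing:
  assumes vs: "vector_space scale" and s: "surj T" and van: "vanishing_poly scale T p"
    and c0: "coeff p 0 = 0"
  shows "\<exists>q. vanishing_poly scale T q \<and> degree q < degree p"
proof -
  obtain a q where pq: "p = pCons a q" by (cases p) auto
  have a: "a = 0" using c0 pq by simp
  have q0: "q \<noteq> 0" using van pq a by (auto simp: vanishing_poly_def)
  have dp: "degree p = Suc (degree q)" using pq q0 by simp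
  have "poly_app scale q T w = 0" for w
  proof -
    obtain v where w: "w = T v" using s by (metis surjD)
    have "0 = poly_app scale p T v" using van by (simp add: vanishing_poly_def)
    also have "\<dots> = (\<Sum>i\<le>Suc (degree q). scale (coeff p i) ((T ^^ i) v))"
      by (simp add: poly_app_def dp)
    also have "\<dots> = (\<Sum>i\<le>degree q. scale (coeff p (Suc i)) ((T ^^ Suc i) v)) + scale (coeff p 0) v"
      by (subst sum.atMost_Suc_shift) simp
    also have "\<dots> = (\<Sum>i\<le>degree q. scale (coeff q i) ((T ^^ i) (T v)))"
      using module.scale_zero_left[OF vs[folded module_iff_vector_space]] c0 pq
      by (simp add: funpow_Suc_right del: funpow.simps)
    also have "\<dots> = poly_app scale q T w" by (simp add: poly_app_def w)
    finally show ?thesis by simp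
  qed
  then show ?thesis using q0 dp by (auto simp: vanishing_poly_def)
qed

theorem mainTheorem16:
  fixes scale :: "'a::field \<Rightarrow> 'v::ab_group_add \<Rightarrow> 'v"
    and T :: "'v \<Rightarrow> 'v"
  assumes "vector_space scale"
    and "bij T"
  shows "(\<forall>p. vanishing_poly scale T p \<longrightarrow> vanishing_poly scale (inv T) (reflect_poly p))
    \<and> (\<forall>pm. minimal_poly scale T pm \<longrightarrow>
          poly pm 0 \<noteq> 0 \<and>
          minimal_poly scale (inv T) (smult (inverse (poly pm 0)) (reflect_poly pm)))"
proof (intro conjI allI impI)
  fix p assume "vanishing_poly scale T p"
  then show "vanishing_poly scale (inv T) (reflect_poly p)"
    using reflect_vanishing assms by blast
next
  fix pm assume mp: "minimal_poly scale T pm"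
  have vm: "vanishing_poly scale T pm" and lc: "lead_coeff pm = 1"
    and mn: "\<And>q. vanishing_poly scale T q \<Longrightarrow> degree pm \<le> degree q"
    using mp by (auto simp: minimal_poly_def)
  have c0: "coeff pm 0 \<noteq> 0"
  proof
    assume "coeff pm 0 = 0"
    then obtain q where "vanishing_poly scale T q" "degree q < degree pm"
      using shift_vanishing[OF assms(1) bij_is_surj[OF assms(2)] vm] by blast
    then show False using mn by fastforce
  qed
  then show pm0: "poly pm 0 \<noteq> 0" by (simp add: poly_0_coeff_0)
  let ?r = "smult (inverse (poly pm 0)) (reflect_poly pm)"
  have dr: "degree ?r = degree pm" using c0 pm0 by simp
  have lr: "lead_coeff ?r = 1"
  proof -
    have "lead_coeff (reflect_poly pm) = coeff pm 0"
      using c0 by (simp add: coeff_reflect_poly)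
    then show ?thesis using dr pm0 by (simp add: poly_0_coeff_0)
  qed
  have vr: "vanishing_poly scale (inv T) ?r"
    using smult_vanishing[OF assms(1) reflect_vanishing[OF assms vm]] pm0 by simp
  have bi: "bij (inv T)" using assms(2) by (simp add: bij_imp_bij_inv)
  have ii: "inv (inv T) = T" using assms(2) by (simp add: inv_inv_eq)
  have "degree ?r \<le> degree q" if "vanishing_poly scale (inv T) q" for q
  proof -
    have "vanishing_poly scale T (reflect_poly q)"
      using reflect_vanishing[OF assms(1) bi that] ii by simp
    then have "degree pm \<le> degree (reflect_poly q)" by (rule mn)
    then show ?thesis using dr degree_reflect_poly_le[of q] by simp
  qed
  then show "minimal_poly scale (inv T) ?r"
    using lr vr by (simp add: minimal_poly_def)
qed

end
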